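(* Let $\bar U\in\mathcal{U}$ be such that $(A_{\bar U},G_{\bar U})$ is reachable and $(C_{\bar U},A_{\bar U})$ is observable. Let $\tilde R$ be the unique positive definite solution of $$\tilde R=A_{\bar U}(\tilde R-\tilde FC_{\bar U}\tilde R)A_{\bar U}^{\top}+G_{\bar U}G_{\bar U}^{\top},\qquad \tilde F=\tilde RC_{\bar U}^{\top}(C_{\bar U}\tilde RC_{\bar U}^{\top}+M)^{-1}.$$ Let $\sigma_1,\dots,\sigma_r$ be the eigenvalues of $A_{\bar U}(I_r-\tilde FC_{\bar U})\in\mathbb{R}^{r\times r}$. Then the eigenvalues of $A_d(I_n-\bar U\tilde FC)\in\mathbb{R}^{n\times n}$, counted with multiplicity, are $$\sigma_1,\dots,\sigma_r,\ e^{\lambda_{r+1}(A)h},\dots,e^{\lambda_n(A)h}.$$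
   Context: Let $A\in\mathbb{R}^{n\times n}$ have eigenvalues $\lambda_1(A),\dots,\lambda_n(A)$, ordered so that $\mathrm{Re}\,\lambda_1(A)\ge\dots\ge\mathrm{Re}\,\lambda_n(A)$, with unit-norm (generalized) eigenvectors $\psi_i(A)$. Fix $r\in\{1,\dots,n-1\}$ with $\mathrm{Re}\,\lambda_r(A)>\mathrm{Re}\,\lambda_{r+1}(A)$. Let $\mathrm{St}(r,n)=\{X\in\mathbb{R}^{n\times r}:X^{\top}X=I_r\}$ and $$\mathcal{U}=\{(\psi_1(A),\dots,\psi_r(A))K\in\mathrm{St}(r,n):K\in\mathbb{C}^{r\times r}\}.$$ These are the real orthonormal-column matrices whose column space is the $A$-invariant subspace spanned by $\psi_1(A),\dots,\psi_r(A)$; every $\bar U\in\mathcal{U}$ satisfies $(I_n-\bar U\bar U^{\top})A\bar U=0$. Let $h>0$, $A_d=e^{Ah}$, $G\in\mathbb{R}^{n\times q}$ and $$G_d=\sqrt{\int_0^h e^{A\tau}GG^{\top}e^{A^{\top}\tau}d\tau}$$ (positive semidefinite square root). Let $C\in\mathbb{R}^{p\times n}$ and $H\in\mathbb{R}^{p\times p}$ with $\det H\ne0$, and set $M=HH^{\top}$. Define $A_{\bar U}=\bar U^{\top}A_d\bar U$, $G_{\bar U}=\bar U^{\top}G_d$ and $C_{\bar U}=C\bar U$. *)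

theory Defs
  imports "HOL-Analysis.Analysis" "HOL-Computational_Algebra.Polynomial"
begin

primrec matpow :: "'a::comm_ring_1^'n^'n \<Rightarrow> nat \<Rightarrow> 'a^'n^'n" where
  "matpow A 0 = mat 1"
| "matpow A (Suc k) = A ** matpow A k"

definition mexp :: "real^'n^'n \<Rightarrow> real^'n^'n" where
  "mexp A = (\<chi> i j. (\<Sum>k. (matpow A k) $ i $ j / fact k))"

definition psd :: "real^'n^'n \<Rightarrow> bool" where
  "psd S \<longleftrightarrow> transpose S = S \<and> (\<forall>x. 0 \<le> x \<bullet> (S *v x))"

definition pd :: "real^'n^'n \<Rightarrow> bool" where
  "pd S \<longleftrightarrow> transpose S = S \<and> (\<forall>x. x \<noteq> 0 \<longrightarrow> 0 < x \<bullet> (S *v x))"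

definition psd_sqrt :: "real^'n^'n \<Rightarrow> real^'n^'n" where
  "psd_sqrt W = (THE S. psd S \<and> S ** S = W)"

definition disc_noise :: "real \<Rightarrow> real^'n^'n \<Rightarrow> real^'q^'n \<Rightarrow> real^'n^'n" where
  "disc_noise h A G = psd_sqrt (integral {0..h}
      (\<lambda>\<tau>. mexp (\<tau> *\<^sub>R A) ** G ** transpose G ** transpose (mexp (\<tau> *\<^sub>R A))))"

definition reachable :: "real^'r^'r \<Rightarrow> real^'q^'r \<Rightarrow> bool" where
  "reachable A B \<longleftrightarrow>
     span (\<Union>k\<in>{..<CARD('r)}. range (\<lambda>v. (matpow A k ** B) *v v)) = UNIV"

definition observable :: "real^'r^'p \<Rightarrow> real^'r^'r \<Rightarrow> bool" where
  "observable C A \<longleftrightarrow>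
     (\<forall>x. (\<forall>k<CARD('r). (C ** matpow A k) *v x = 0) \<longrightarrow> x = 0)"

definition cmat :: "real^'m^'n \<Rightarrow> complex^'m^'n" where
  "cmat A = (\<chi> i j. complex_of_real (A $ i $ j))"

text \<open>Characteristic polynomial det(x I - A) over the complex numbers; its roots,
  counted with multiplicity, are the eigenvalues of A counted with multiplicity.\<close>
definition charpoly :: "real^'n^'n \<Rightarrow> complex poly" where
  "charpoly A = det (\<chi> i j. (if i = j then [:0, 1:] else 0) - [: complex_of_real (A $ i $ j) :])"

definition gen_eigvecs :: "real^'n^'n \<Rightarrow> complex \<Rightarrow> (complex^'n) set" where
  "gen_eigvecs A \<mu> = {v. \<exists>k. matpow (cmat A - mat \<mu>) k *v v = 0}"

text \<open>The set U: real n x r matrices with orthonormal columns whose (complex) column space is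
  the span of the generalized eigenvectors of A for lambda_1,...,lambda_r (0-indexed: lam 0 .. lam (r-1)),
  r = CARD('r).\<close>
definition frames :: "real^'n^'n \<Rightarrow> (nat \<Rightarrow> complex) \<Rightarrow> (real^'r^'n) set" where
  "frames A lam = {U. transpose U ** U = mat 1 \<and>
      range (\<lambda>c. cmat U *v c) = vec.span (\<Union>i\<in>{..<CARD('r)}. gen_eigvecs A (lam i))}"

end

theory Submission
  imports Defs "Jordan_Normal_Form.Schur_Decomposition"
begin

hide_const (open) Matrix.mat Determinant.det Matrix.vec Matrix.row
no_notation vec_index (infixl "$" 100)

definition idx :: "'n::finite \<Rightarrow> nat" where
  "idx = (SOME f. bij_betw f (UNIV::'n set) {0..<CARD('n)})"

lemma idx_bij: "bij_betw (idx::'n::finite\<Rightarrow>nat) UNIV {0..<CARD('n)}"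
proof -
  have "\<exists>f. bij_betw f (UNIV::'n set) {0..<CARD('n)}"
    using ex_bij_betw_finite_nat[of "UNIV::'n set"] by simp
  then show ?thesis unfolding idx_def by (rule someI_ex)
qed

definition ridx :: "nat \<Rightarrow> 'n::finite" where
  "ridx = inv_into UNIV idx"

lemma idx_less[simp]: "idx (i::'n::finite) < CARD('n)"
  using idx_bij[where 'n='n] by (auto simp: bij_betw_def)

lemma idx_inj: "inj (idx :: 'n::finite \<Rightarrow> nat)"
  using idx_bij[where 'n='n] by (auto simp: bij_betw_def)

lemma idx_eq_iff[simp]: "idx (i::'n::finite) = idx j \<longleftrightarrow> i = j"
  using idx_inj by (auto simp: inj_def)

lemma ridx_idx[simp]: "ridx (idx (i::'n::finite)) = i"
  unfolding ridx_def by (rule inv_f_f[OF idx_inj])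

lemma idx_ridx[simp]: "k < CARD('n) \<Longrightarrow> idx (ridx k :: 'n::finite) = k"
  unfolding ridx_def using idx_bij[where 'n='n]
  by (metis atLeastLessThan_iff bij_betw_inv_into_right zero_le)

lemma ridx_eq_iff[simp]: "i < CARD('n) \<Longrightarrow> j < CARD('n) \<Longrightarrow> (ridx i :: 'n::finite) = ridx j \<longleftrightarrow> i = j"
  by (metis idx_ridx)

lemma ridx_bij: "bij_betw (ridx :: nat \<Rightarrow> 'n::finite) {0..<CARD('n)} UNIV"
  unfolding ridx_def by (rule bij_betw_inv_into[OF idx_bij])

lemma sum_idx: "(\<Sum>k\<in>{0..<CARD('n)}. f k) = (\<Sum>i\<in>(UNIV::'n::finite set). f (idx i))"
  by (rule sum.reindex_bij_betw[OF idx_bij, symmetric])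

lemma prod_idx: "(\<Prod>k\<in>{0..<CARD('n)}. f k) = (\<Prod>i\<in>(UNIV::'n::finite set). f (idx i))"
  by (rule prod.reindex_bij_betw[OF idx_bij, symmetric])

definition to_mat :: "'a^'m::finite^'n::finite \<Rightarrow> 'a mat" where
  "to_mat A = Matrix.mat CARD('n) CARD('m) (\<lambda>(i,j). A $ ridx i $ ridx j)"

definition of_mat :: "'a mat \<Rightarrow> 'a^'m::finite^'n::finite" where
  "of_mat M = (\<chi> i j. M $$ (idx i, idx j))"

lemma to_mat_carrier[simp]: "to_mat (A::'a^'m::finite^'n::finite) \<in> carrier_mat CARD('n) CARD('m)"
  unfolding to_mat_def by simp

lemma dim_to_mat[simp]: "dim_row (to_mat (A::'a^'m::finite^'n::finite)) = CARD('n)"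
  "dim_col (to_mat (A::'a^'m::finite^'n::finite)) = CARD('m)"
  unfolding to_mat_def by simp_all

lemma index_to_mat[simp]: "i < CARD('n) \<Longrightarrow> j < CARD('m) \<Longrightarrow>
   to_mat (A::'a^'m::finite^'n::finite) $$ (i,j) = A $ ridx i $ ridx j"
  unfolding to_mat_def by simp

lemma of_to_mat[simp]: "of_mat (to_mat A) = A"
  unfolding of_mat_def by (simp add: vec_eq_iff)

lemma to_of_mat: "M \<in> carrier_mat CARD('n) CARD('m) \<Longrightarrow> to_mat (of_mat M :: 'a^'m::finite^'n::finite) = M"
  unfolding of_mat_def by (intro eq_matI) auto

lemma to_mat_inj: "to_mat A = to_mat B \<Longrightarrow> A = B"
  by (metis of_to_mat)

lemma to_mat_mult: "to_mat ((A::'a::semiring_1^'m::finite^'n::finite) ** (B::'a^'k::finite^'m)) = to_mat A * to_mat B"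
proof (intro eq_matI)
  fix i j assume i: "i < dim_row (to_mat A * to_mat B)" and j: "j < dim_col (to_mat A * to_mat B)"
  hence i': "i < CARD('n)" and j': "j < CARD('k)" by auto
  have "(to_mat A * to_mat B) $$ (i,j) = (\<Sum>l\<in>{0..<CARD('m)}. A $ ridx i $ ridx l * B $ ridx l $ ridx j)"
    using i' j' by (simp add: scalar_prod_def Matrix.row_def col_def)
  also have "\<dots> = (\<Sum>l\<in>UNIV. A $ ridx i $ l * B $ l $ ridx j)"
    by (subst sum_idx) simp
  finally show "to_mat (A ** B) $$ (i, j) = (to_mat A * to_mat B) $$ (i, j)"
    using i' j' by (simp add: matrix_matrix_mult_def)
qed auto

lemma to_mat_add: "to_mat ((A::'a::plus^'m::finite^'n::finite) + B) = to_mat A + to_mat B"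
  by (intro eq_matI) auto

lemma to_mat_minus: "to_mat ((A::'a::minus^'m::finite^'n::finite) - B) = to_mat A - to_mat B"
  by (intro eq_matI) auto

lemma to_mat_uminus: "to_mat (- (A::'a::uminus^'m::finite^'n::finite)) = - to_mat A"
  by (intro eq_matI) auto

lemma to_mat_one: "to_mat (mat 1 :: 'a::{zero,one}^'n::finite^'n) = 1\<^sub>m CARD('n)"
  by (intro eq_matI) (auto simp: Finite_Cartesian_Product.mat_def)

lemma to_mat_map: "to_mat (\<chi> i j. f ((A::'a^'m::finite^'n::finite) $ i $ j)) = map_mat f (to_mat A)"
  by (intro eq_matI) auto

lemma pow_mat_Suc_left: assumes "(A :: 'a :: semiring_1 mat) \<in> carrier_mat n n"
  shows "A ^\<^sub>m Suc k = A * A ^\<^sub>m k"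
proof (induction k)
  case 0 then show ?case using assms by simp
next
  case (Suc k)
  have "A ^\<^sub>m Suc (Suc k) = (A ^\<^sub>m Suc k) * A" by simp
  also have "\<dots> = (A * A ^\<^sub>m k) * A" using Suc by simp
  also have "\<dots> = A * (A ^\<^sub>m k * A)" using assms by (intro assoc_mult_mat) auto
  finally show ?case by simp
qed

lemma to_mat_matpow: "to_mat (matpow (A::'a::comm_ring_1^'n::finite^'n) k) = to_mat A ^\<^sub>m k"
proof (induction k)
  case 0 then show ?case by (simp add: to_mat_one)
next
  case (Suc k)
  have "to_mat (matpow A (Suc k)) = to_mat A * to_mat A ^\<^sub>m k"
    by (simp add: to_mat_mult Suc)
  also have "\<dots> = to_mat A ^\<^sub>m k * to_mat A"
    by (metis pow_mat.simps(2) pow_mat_Suc_left to_mat_carrier)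
  finally show ?case by simp
qed

lemma det_to_mat: "Determinant.det (to_mat (A::'a::comm_ring_1^'n::finite^'n)) = det A"
proof -
  let ?n = "CARD('n)"
  let ?P = "{p. p permutes (UNIV::'n set)}"
  let ?Q = "{q. q permutes {0..<?n}}"
  define \<phi> where "\<phi> = map_permutation (UNIV::'n set) idx"
  define \<psi> where "\<psi> = map_permutation {0..<?n} (ridx :: nat \<Rightarrow> 'n)"
  have bij: "bij_betw \<phi> ?P ?Q"
  proof (rule bij_betw_byWitness[where f'=\<psi>])
    show "\<forall>a\<in>?P. \<psi> (\<phi> a) = a" unfolding \<phi>_def \<psi>_def
      by (auto intro!: map_permutation_compose_inv idx_bij)
    show "\<forall>a\<in>?Q. \<phi> (\<psi> a) = a" unfolding \<phi>_def \<psi>_def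
      by (auto intro!: map_permutation_compose_inv ridx_bij)
    show "\<phi> ` ?P \<subseteq> ?Q" unfolding \<phi>_def
      by (auto intro!: map_permutation_permutes idx_bij)
    show "\<psi> ` ?Q \<subseteq> ?P" unfolding \<psi>_def
      by (auto intro!: map_permutation_permutes ridx_bij)
  qed
  have "Determinant.det (to_mat A) = (\<Sum>q\<in>?Q. signof q * (\<Prod>i = 0..<?n. to_mat A $$ (i, q i)))"
    unfolding Determinant.det_def by simp
  also have "\<dots> = (\<Sum>p\<in>?P. signof (\<phi> p) * (\<Prod>i = 0..<?n. to_mat A $$ (i, \<phi> p i)))"
    by (rule sum.reindex_bij_betw[OF bij, symmetric])
  also have "\<dots> = (\<Sum>p\<in>?P. of_int (sign p) * (\<Prod>x\<in>UNIV. A $ x $ p x))"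
  proof (rule sum.cong[OF refl])
    fix p assume p: "p \<in> ?P"
    have s: "sign (\<phi> p) = sign p" unfolding \<phi>_def
      by (rule sign_map_permutation) (use p idx_inj in auto)
    have "(\<Prod>i = 0..<?n. to_mat A $$ (i, \<phi> p i)) = (\<Prod>x\<in>(UNIV::'n set). to_mat A $$ (idx x, \<phi> p (idx x)))"
      by (rule prod_idx)
    also have "\<dots> = (\<Prod>x\<in>UNIV. A $ x $ p x)"
    proof (rule prod.cong[OF refl])
      fix x
      have "\<phi> p (idx x) = idx (p x)" unfolding \<phi>_def
        by (rule map_permutation_apply) (use idx_inj in auto)
      then show "to_mat A $$ (idx x, \<phi> p (idx x)) = A $ x $ p x" by simp
    qed
    finally show "signof (\<phi> p) * (\<Prod>i = 0..<?n. to_mat A $$ (i, \<phi> p i)) = of_int (sign p) * (\<Prod>x\<in>UNIV. A $ x $ p x)"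
      using s by simp
  qed
  also have "\<dots> = det A" unfolding Determinants.det_def by simp
  finally show ?thesis .
qed


lemma jnf_block_det:
  fixes X :: "'a::idom mat"
  assumes X: "X \<in> carrier_mat n n" and Y: "Y \<in> carrier_mat r r"
    and U: "U \<in> carrier_mat n r" and K: "K \<in> carrier_mat r n"
    and XU: "X * U = U * Y"
  shows "Determinant.det (X + U * K) * Determinant.det Y = Determinant.det X * Determinant.det (K * U + Y)"
proof -
  define M where "M = four_block_mat X (U * Y) (- K) Y"
  define T where "T = four_block_mat (1\<^sub>m n) (- U) (0\<^sub>m r n) (1\<^sub>m r)"
  have UY: "U * Y \<in> carrier_mat n r" using U Y by simp
  have mK: "- K \<in> carrier_mat r n" using K by simp
  have mU: "- U \<in> carrier_mat n r" using U by simp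
  have Mc: "M \<in> carrier_mat (n + r) (n + r)" unfolding M_def using X Y by simp
  have Tc: "T \<in> carrier_mat (n + r) (n + r)" unfolding T_def by simp
  have MT: "M * T = four_block_mat X (0\<^sub>m n r) (- K) (K * U + Y)"
  proof -
    have "M * T = four_block_mat (X * 1\<^sub>m n + U * Y * 0\<^sub>m r n) (X * - U + U * Y * 1\<^sub>m r)
       (- K * 1\<^sub>m n + Y * 0\<^sub>m r n) (- K * - U + Y * 1\<^sub>m r)"
      unfolding M_def T_def by (rule mult_four_block_mat[OF X UY mK Y one_carrier_mat mU zero_carrier_mat one_carrier_mat])
    also have "X * 1\<^sub>m n + U * Y * 0\<^sub>m r n = X" using X UY by (simp add: right_mult_zero_mat)
    also have "X * - U + U * Y * 1\<^sub>m r = 0\<^sub>m n r"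
    proof -
      have "X * - U = - (U * Y)" using X U XU by simp
      then show ?thesis using right_mult_one_mat[OF UY] uminus_l_inv_mat[OF UY] by simp
    qed
    also have "- K * 1\<^sub>m n + Y * 0\<^sub>m r n = - K" using K Y by simp
    also have "- K * - U + Y * 1\<^sub>m r = K * U + Y"
    proof -
      have "- K * - U = K * U" using K U by simp
      then show ?thesis using Y right_mult_one_mat[OF Y] by simp
    qed
    finally show ?thesis .
  qed
  have TM: "T * M = four_block_mat (X + U * K) (0\<^sub>m n r) (- K) Y"
  proof -
    have "T * M = four_block_mat (1\<^sub>m n * X + - U * - K) (1\<^sub>m n * (U * Y) + - U * Y)
       (0\<^sub>m r n * X + 1\<^sub>m r * - K) (0\<^sub>m r n * (U * Y) + 1\<^sub>m r * Y)"
      unfolding M_def T_def by (rule mult_four_block_mat[OF one_carrier_mat mU zero_carrier_mat one_carrier_mat X UY mK Y])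
    also have "1\<^sub>m n * X + - U * - K = X + U * K" using X U K left_mult_one_mat[OF X] by simp
    also have "1\<^sub>m n * (U * Y) + - U * Y = 0\<^sub>m n r"
    proof -
      have "- U * Y = - (U * Y)" using U Y by simp
      moreover have "U * Y + - (U * Y) = 0\<^sub>m n r"
        using comm_add_mat[OF UY uminus_carrier_mat[OF UY]] uminus_l_inv_mat[OF UY] by simp
      ultimately show ?thesis using UY left_mult_one_mat[OF UY] by simp
    qed
    also have "0\<^sub>m r n * X + 1\<^sub>m r * - K = - K" using X K left_mult_one_mat[OF mK] left_mult_zero_mat[OF X] by simp
    also have "0\<^sub>m r n * (U * Y) + 1\<^sub>m r * Y = Y" using UY Y left_mult_one_mat[OF Y] left_mult_zero_mat[OF UY] by simp
    finally show ?thesis .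
  qed
  have dT: "Determinant.det T = 1" unfolding T_def
    by (subst det_four_block_mat_lower_left_zero[OF one_carrier_mat mU refl one_carrier_mat]) simp
  have "Determinant.det (M * T) = Determinant.det M" using det_mult[OF Mc Tc] dT by simp
  moreover have "Determinant.det (T * M) = Determinant.det M" using det_mult[OF Tc Mc] dT by simp
  moreover have "Determinant.det (M * T) = Determinant.det X * Determinant.det (K * U + Y)"
    unfolding MT using K U Y by (intro det_four_block_mat_upper_right_zero[OF X refl mK]) auto
  moreover have "Determinant.det (T * M) = Determinant.det (X + U * K) * Determinant.det Y"
    unfolding TM using X U K by (intro det_four_block_mat_upper_right_zero[OF _ refl mK Y]) auto
  ultimately show ?thesis by simp
qed

lemma vec_block_det:
  fixes X :: "'a::idom^'n::finite^'n" and Y :: "'a^'r::finite^'r" and U :: "'a^'r^'n" and K :: "'a^'n^'r"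
  assumes XU: "X ** U = U ** Y"
  shows "det (X + U ** K) * det Y = det X * det (K ** U + Y)"
proof -
  have "to_mat X * to_mat U = to_mat U * to_mat Y" using XU by (metis to_mat_mult)
  from jnf_block_det[OF to_mat_carrier to_mat_carrier to_mat_carrier to_mat_carrier this]
  show ?thesis by (simp add: det_to_mat[symmetric] to_mat_add to_mat_mult)
qed


lemma mat_eqI: assumes "\<And>i j. A $ i $ j = B $ i $ j" shows "A = B"
proof -
  have "\<And>i. A $ i = B $ i" using assms by (simp add: Finite_Cartesian_Product.vec_eq_iff)
  then show ?thesis by (simp add: Finite_Cartesian_Product.vec_eq_iff)
qed

lemma matrix_sub_rdistrib: "((A::'a::ring_1^'m::finite^'n::finite) - B) ** (C::'a^'k::finite^'m) = A ** C - B ** C"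
  unfolding matrix_matrix_mult_def by (vector sum_subtractf left_diff_distrib)

lemma matrix_sub_ldistrib: "(A::'a::ring_1^'m::finite^'n::finite) ** ((B::'a^'k::finite^'m) - C) = A ** B - A ** C"
  unfolding matrix_matrix_mult_def by (vector sum_subtractf right_diff_distrib)

lemma matrix_add_rdistrib: "((A::'a::semiring_1^'m::finite^'n::finite) + B) ** (C::'a^'k::finite^'m) = A ** C + B ** C"
  unfolding matrix_matrix_mult_def by (vector sum.distrib distrib_right)

lemma mat_mult_left: "mat c ** (A::'a::comm_semiring_1^'m::finite^'n::finite) = (\<chi> i j. c * A $ i $ j)"
  by (rule mat_eqI) (simp add: matrix_matrix_mult_def Finite_Cartesian_Product.mat_def if_distrib[where f="\<lambda>x. x * _"] cong: if_cong)

lemma mat_mult_right: "(A::'a::comm_semiring_1^'m::finite^'n::finite) ** mat c = (\<chi> i j. c * A $ i $ j)"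
  by (rule mat_eqI) (simp add: matrix_matrix_mult_def Finite_Cartesian_Product.mat_def if_distrib[where f="\<lambda>x. _ * x"] mult.commute cong: if_cong)

definition Pc :: "real^'m::finite^'n::finite \<Rightarrow> complex poly^'m^'n" where
  "Pc M = (\<chi> i j. [:complex_of_real (M $ i $ j):])"

lemma const_poly_sum: "[:sum f S:] = (\<Sum>x\<in>S. [:f x:])"
proof (induction S rule: infinite_finite_induct)
  case (insert x F)
  have "[:sum f (insert x F):] = [:f x + sum f F:]" using insert by simp
  also have "\<dots> = [:f x:] + [:sum f F:]" by simp
  also have "\<dots> = (\<Sum>y\<in>insert x F. [:f y:])" using insert by simp
  finally show ?case .
qed auto

lemma const_poly_diff: "[:(a::'a::comm_ring_1) - b:] = [:a:] - [:b:]"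
  by simp

lemma const_poly_mult: "[:(a::'a::comm_ring_1) * b:] = [:a:] * [:b:]"
  by simp

lemma Pc_mult: "Pc ((A::real^'m::finite^'n::finite) ** (B::real^'k::finite^'m)) = Pc A ** Pc B"
  by (rule mat_eqI) (simp add: Pc_def matrix_matrix_mult_def const_poly_sum mult.commute)

lemma Pc_diff: "Pc ((A::real^'m::finite^'n::finite) - B) = Pc A - Pc B"
  by (rule mat_eqI) (simp add: Pc_def)

lemma charpoly_alt: "charpoly (M::real^'n::finite^'n) = det (mat [:0,1:] - Pc M)"
  unfolding charpoly_def Pc_def
  by (rule arg_cong[where f=det]) (vector Finite_Cartesian_Product.mat_def)

lemma charpoly_block:
  fixes X :: "real^'n::finite^'n" and Y :: "real^'r::finite^'r" and U :: "real^'r^'n" and K :: "real^'n^'r"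
  assumes XU: "X ** U = U ** Y"
  shows "charpoly (X - U ** K) * charpoly Y = charpoly X * charpoly (Y - K ** U)"
proof -
  define z :: "complex poly" where "z = [:0,1:]"
  have comm: "(mat z - Pc X) ** Pc U = Pc U ** (mat z - Pc Y)"
  proof -
    have "(mat z - Pc X) ** Pc U = mat z ** Pc U - Pc (X ** U)"
      by (simp add: matrix_sub_rdistrib Pc_mult)
    also have "\<dots> = Pc U ** mat z - Pc (U ** Y)" using XU by (simp add: mat_mult_left mat_mult_right)
    also have "\<dots> = Pc U ** (mat z - Pc Y)" by (simp add: matrix_sub_ldistrib Pc_mult)
    finally show ?thesis .
  qed
  from vec_block_det[OF comm, of "Pc K"]
  have "det (mat z - Pc X + Pc U ** Pc K) * det (mat z - Pc Y) =
        det (mat z - Pc X) * det (Pc K ** Pc U + (mat z - Pc Y))" .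
  moreover have "mat z - Pc X + Pc U ** Pc K = mat z - Pc (X - U ** K)"
    by (simp add: Pc_diff Pc_mult)
  moreover have "Pc K ** Pc U + (mat z - Pc Y) = mat z - Pc (Y - K ** U)"
    by (simp add: Pc_diff Pc_mult)
  ultimately show ?thesis unfolding charpoly_alt z_def by simp
qed


lemma matpow_entry_bound:
  fixes M :: "'a::{real_normed_field}^'n::finite^'n"
  defines "b \<equiv> (\<Sum>i\<in>UNIV. \<Sum>j\<in>UNIV. norm (M $ i $ j))"
  shows "norm (matpow M k $ i $ j) \<le> b ^ k"
proof (induction k arbitrary: i j)
  case 0
  then show ?case by (simp add: Finite_Cartesian_Product.mat_def)
next
  case (Suc k)
  have b0: "0 \<le> b" unfolding b_def by (intro sum_nonneg) auto
  have "norm (matpow M (Suc k) $ i $ j) = norm (\<Sum>l\<in>UNIV. M $ i $ l * matpow M k $ l $ j)"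
    by (simp add: matrix_matrix_mult_def)
  also have "\<dots> \<le> (\<Sum>l\<in>UNIV. norm (M $ i $ l) * norm (matpow M k $ l $ j))"
    by (rule order_trans[OF norm_sum]) (simp add: norm_mult)
  also have "\<dots> \<le> (\<Sum>l\<in>UNIV. norm (M $ i $ l) * b ^ k)"
    by (intro sum_mono mult_left_mono Suc.IH) auto
  also have "\<dots> = (\<Sum>l\<in>UNIV. norm (M $ i $ l)) * b ^ k"
    by (simp add: sum_distrib_right)
  also have "\<dots> \<le> b * b ^ k"
  proof (intro mult_right_mono)
    show "(\<Sum>l\<in>UNIV. norm (M $ i $ l)) \<le> b" unfolding b_def
      by (rule member_le_sum[where f="\<lambda>i. \<Sum>l\<in>UNIV. norm (M $ i $ l)"]) (auto intro: sum_nonneg)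
  qed (use b0 in simp)
  finally show ?case by simp
qed

lemma summable_matpow:
  fixes M :: "'a::{real_normed_field,banach}^'n::finite^'n"
  shows "summable (\<lambda>k. matpow M k $ i $ j / fact k)"
proof -
  define b where "b = (\<Sum>i\<in>UNIV. \<Sum>j\<in>UNIV. norm (M $ i $ j))"
  have "summable (\<lambda>k. inverse (fact k) * b ^ k)" by (rule summable_exp)
  then show ?thesis
  proof (rule summable_comparison_test'[where N=0])
    fix k :: nat
    have "norm (matpow M k $ i $ j / fact k) = norm (matpow M k $ i $ j) / fact k"
      by (simp add: norm_divide)
    also have "\<dots> \<le> b ^ k / fact k"
      using matpow_entry_bound[of M k i j] unfolding b_def by (simp add: divide_right_mono)
    finally show "norm (matpow M k $ i $ j / fact k) \<le> inverse (fact k) * b ^ k"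
      by (simp add: divide_inverse mult.commute)
  qed
qed

lemma upper_triangular_pow:
  fixes B :: "'a::comm_ring_1 mat"
  assumes B: "B \<in> carrier_mat n n" and ut: "upper_triangular B"
  shows "upper_triangular (B ^\<^sub>m k) \<and> (\<forall>i<n. (B ^\<^sub>m k) $$ (i,i) = (B $$ (i,i)) ^ k)"
proof (induction k)
  case 0
  then show ?case using B by (auto simp: upper_triangular_def)
next
  case (Suc k)
  have Bk: "B ^\<^sub>m k \<in> carrier_mat n n" using B by simp
  have z1: "(B ^\<^sub>m k) $$ (i,l) = 0" if "l < i" "i < n" for i l
    using Suc.IH that Bk by (auto simp: upper_triangular_def)
  have z2: "B $$ (l,j) = 0" if "j < l" "l < n" for l j
    using ut that B by (auto simp: upper_triangular_def)
  have entry: "(B ^\<^sub>m Suc k) $$ (i,j) = (\<Sum>l\<in>{0..<n}. (B ^\<^sub>m k) $$ (i,l) * B $$ (l,j))"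
    if "i < n" "j < n" for i j
    using that B Bk by (simp add: scalar_prod_def Matrix.row_def col_def)
  have "upper_triangular (B ^\<^sub>m Suc k)"
  proof (rule upper_triangularI)
    fix i j assume j: "j < i" and i: "i < dim_row (B ^\<^sub>m Suc k)"
    hence i': "i < n" using B by simp
    have "(\<Sum>l\<in>{0..<n}. (B ^\<^sub>m k) $$ (i,l) * B $$ (l,j)) = 0"
    proof (rule sum.neutral, intro ballI)
      fix l assume "l \<in> {0..<n}"
      then show "(B ^\<^sub>m k) $$ (i,l) * B $$ (l,j) = 0"
        using z1[of l i] z2[of j l] j i' by (cases "l < i") auto
    qed
    then show "(B ^\<^sub>m Suc k) $$ (i,j) = 0" using entry[of i j] i' j by simp
  qed
  moreover have "(B ^\<^sub>m Suc k) $$ (i,i) = (B $$ (i,i)) ^ Suc k" if i: "i < n" for i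
  proof -
    have "(\<Sum>l\<in>{0..<n}. (B ^\<^sub>m k) $$ (i,l) * B $$ (l,i)) = (B ^\<^sub>m k) $$ (i,i) * B $$ (i,i)"
    proof -
      have "(\<Sum>l\<in>{0..<n}. (B ^\<^sub>m k) $$ (i,l) * B $$ (l,i)) = 
        (B ^\<^sub>m k) $$ (i,i) * B $$ (i,i) + (\<Sum>l\<in>{0..<n}-{i}. (B ^\<^sub>m k) $$ (i,l) * B $$ (l,i))"
        using i by (subst sum.remove[of _ i]) auto
      moreover have "(\<Sum>l\<in>{0..<n}-{i}. (B ^\<^sub>m k) $$ (i,l) * B $$ (l,i)) = 0"
      proof (rule sum.neutral, intro ballI)
        fix l assume "l \<in> {0..<n}-{i}"
        then show "(B ^\<^sub>m k) $$ (i,l) * B $$ (l,i) = 0"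
          using z1[of l i] z2[of i l] i by (cases "l < i") auto
      qed
      ultimately show ?thesis by simp
    qed
    then show ?thesis using entry[of i i] i Suc.IH by simp
  qed
  ultimately show ?case by blast
qed

lemma exp_series_complex: "(\<lambda>k. (z::complex) ^ k / fact k) sums exp z"
proof -
  have "(\<lambda>k. z ^ k /\<^sub>R fact k) sums exp z" by (rule exp_converges)
  moreover have "(\<lambda>k. z ^ k /\<^sub>R fact k) = (\<lambda>k. z ^ k / fact k)"
    by (auto simp: scaleR_conv_of_real divide_inverse mult.commute)
  ultimately show ?thesis by simp
qed


lemma cmat_mult: "cmat ((A::real^'m::finite^'n::finite) ** (B::real^'k::finite^'m)) = cmat A ** cmat B"
  by (rule mat_eqI) (simp add: cmat_def matrix_matrix_mult_def)

lemma cmat_one: "cmat (mat 1 :: real^'n::finite^'n) = mat 1"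
  by (rule mat_eqI) (simp add: cmat_def Finite_Cartesian_Product.mat_def)

lemma cmat_matpow: "cmat (matpow (A::real^'n::finite^'n) k) = matpow (cmat A) k"
  by (induction k) (simp_all add: cmat_one cmat_mult)

lemma to_mat_cmat_scale: "to_mat (cmat (h *\<^sub>R (X::real^'m::finite^'n::finite))) = complex_of_real h \<cdot>\<^sub>m to_mat (cmat X)"
  by (intro eq_matI) (auto simp: cmat_def)

lemma charpoly_char_poly: "charpoly (M::real^'n::finite^'n) = char_poly (to_mat (cmat M))"
proof -
  have "char_poly_matrix (to_mat (cmat M)) =
     to_mat (\<chi> i j. (if i = j then [:0,1:] else 0) - [:complex_of_real (M $ i $ j):])"
    by (intro eq_matI) (auto simp: char_poly_matrix_def cmat_def)
  then show ?thesis by (simp add: char_poly_def charpoly_def det_to_mat)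
qed

lemma prod_lessThan_list: "(\<Prod>i<n. f i) = prod_list (map f [0..<n])"
  by (induction n) (auto simp: mult.commute)

lemma triple_prod_entry:
  assumes P: "P \<in> carrier_mat n n" and M: "(M::'a::comm_ring_1 mat) \<in> carrier_mat n n" and Q: "Q \<in> carrier_mat n n"
    and a: "a < n" and b: "b < n"
  shows "(P * M * Q) $$ (a,b) = (\<Sum>d\<in>{0..<n}. \<Sum>e\<in>{0..<n}. P $$ (a,d) * M $$ (d,e) * Q $$ (e,b))"
proof -
  have "(P * M * Q) $$ (a,b) = (\<Sum>e\<in>{0..<n}. (P * M) $$ (a,e) * Q $$ (e,b))"
    using P M Q a b by (simp add: scalar_prod_def Matrix.row_def col_def del: assoc_mult_mat)
  also have "\<dots> = (\<Sum>e\<in>{0..<n}. (\<Sum>d\<in>{0..<n}. P $$ (a,d) * M $$ (d,e)) * Q $$ (e,b))"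
    using P M Q a b by (intro sum.cong refl) (simp add: scalar_prod_def Matrix.row_def col_def)
  also have "\<dots> = (\<Sum>e\<in>{0..<n}. \<Sum>d\<in>{0..<n}. P $$ (a,d) * M $$ (d,e) * Q $$ (e,b))"
    by (simp add: sum_distrib_right)
  also have "\<dots> = (\<Sum>d\<in>{0..<n}. \<Sum>e\<in>{0..<n}. P $$ (a,d) * M $$ (d,e) * Q $$ (e,b))"
    by (rule sum.swap)
  finally show ?thesis .
qed

lemma charpoly_mexp:
  fixes X :: "real^'n::finite^'n" and mu :: "nat \<Rightarrow> complex"
  assumes cp: "charpoly X = (\<Prod>i<CARD('n). [:- mu i, 1:])"
  shows "charpoly (mexp (h *\<^sub>R X)) = (\<Prod>i<CARD('n). [:- exp (mu i * complex_of_real h), 1:])"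
proof -
  define n where "n = CARD('n)"
  define Xc where "Xc = to_mat (cmat X)"
  define es where "es = map mu [0..<n]"
  have Xc: "Xc \<in> carrier_mat n n" unfolding Xc_def n_def by simp
  have lin: "char_poly Xc = (\<Prod>a\<leftarrow>es. [:- a, 1:])"
    using cp unfolding Xc_def es_def n_def charpoly_char_poly by (simp add: prod_lessThan_list o_def)
  obtain B P Q where schur: "schur_decomposition Xc es = (B,P,Q)"
    by (cases "schur_decomposition Xc es") auto
  from schur_decomposition[OF Xc lin schur]
  have wit: "similar_mat_wit Xc B P Q" and ut: "upper_triangular B" and dg: "diag_mat B = es" by auto
  note W = similar_mat_witD2[OF Xc wit]
  have B: "B \<in> carrier_mat n n" and P: "P \<in> carrier_mat n n" and Q: "Q \<in> carrier_mat n n"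
    using W by auto
  have Bdiag: "B $$ (i,i) = mu i" if "i < n" for i
  proof -
    have "diag_mat B ! i = es ! i" using dg by simp
    then show ?thesis using that B unfolding diag_mat_def es_def by simp
  qed
  define c where "c = complex_of_real h"
  define Bh where "Bh = c \<cdot>\<^sub>m B"
  have Bh: "Bh \<in> carrier_mat n n" unfolding Bh_def using B by simp
  have uth: "upper_triangular Bh" using ut B unfolding Bh_def upper_triangular_def by auto
  have wit2: "similar_mat_wit (c \<cdot>\<^sub>m Xc) Bh P Q" unfolding Bh_def by (rule similar_mat_wit_smult[OF wit])
  have pw: "(c \<cdot>\<^sub>m Xc) ^\<^sub>m k = P * Bh ^\<^sub>m k * Q" for k
    by (rule similar_mat_wit_pow_id[OF wit2])
  have Bh_conv: "Bh = to_mat (of_mat Bh :: complex^'n^'n)"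
    using Bh unfolding n_def by (simp add: to_of_mat)
  have sumB: "summable (\<lambda>k. (Bh ^\<^sub>m k) $$ (a,b) / fact k)" if "a < n" "b < n" for a b
  proof -
    have "(Bh ^\<^sub>m k) $$ (a,b) = matpow (of_mat Bh :: complex^'n^'n) k $ ridx a $ ridx b" for k
      using that unfolding n_def by (subst Bh_conv) (simp add: to_mat_matpow[symmetric])
    then show ?thesis using summable_matpow[of "of_mat Bh :: complex^'n^'n"] by simp
  qed
  define E where "E = Matrix.mat n n (\<lambda>(a,b). \<Sum>k. (Bh ^\<^sub>m k) $$ (a,b) / fact k)"
  have E: "E \<in> carrier_mat n n" unfolding E_def by simp
  have Bhk: "Bh ^\<^sub>m k \<in> carrier_mat n n" for k using Bh by simp
  have mexp_eq: "to_mat (cmat (mexp (h *\<^sub>R X))) = P * E * Q"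
  proof (rule eq_matI)
    fix a b assume "a < dim_row (P * E * Q)" "b < dim_col (P * E * Q)"
    hence a: "a < n" and b: "b < n" using P Q by auto
    have "to_mat (cmat (mexp (h *\<^sub>R X))) $$ (a,b) =
        complex_of_real (\<Sum>k. matpow (h *\<^sub>R X) k $ ridx a $ ridx b / fact k)"
      using a b unfolding n_def by (simp add: cmat_def mexp_def)
    also have "\<dots> = (\<Sum>k. complex_of_real (matpow (h *\<^sub>R X) k $ ridx a $ ridx b / fact k))"
      by (rule suminf_of_real[OF summable_matpow])
    also have "\<dots> = (\<Sum>k. ((c \<cdot>\<^sub>m Xc) ^\<^sub>m k) $$ (a,b) / fact k)"
    proof (rule arg_cong[where f=suminf], rule ext)
      fix k
      have "((c \<cdot>\<^sub>m Xc) ^\<^sub>m k) = to_mat (cmat (matpow (h *\<^sub>R X) k))"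
        unfolding c_def Xc_def by (simp add: cmat_matpow to_mat_matpow to_mat_cmat_scale[symmetric])
      then show "complex_of_real (matpow (h *\<^sub>R X) k $ ridx a $ ridx b / fact k) = ((c \<cdot>\<^sub>m Xc) ^\<^sub>m k) $$ (a,b) / fact k"
        using a b unfolding n_def by (simp add: cmat_def)
    qed
    also have "\<dots> = (\<Sum>k. \<Sum>d\<in>{0..<n}. \<Sum>e\<in>{0..<n}. P $$ (a,d) * ((Bh ^\<^sub>m k) $$ (d,e) / fact k) * Q $$ (e,b))"
    proof (rule arg_cong[where f=suminf], rule ext)
      fix k
      show "((c \<cdot>\<^sub>m Xc) ^\<^sub>m k) $$ (a,b) / fact k =
         (\<Sum>d\<in>{0..<n}. \<Sum>e\<in>{0..<n}. P $$ (a,d) * ((Bh ^\<^sub>m k) $$ (d,e) / fact k) * Q $$ (e,b))"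
        unfolding pw triple_prod_entry[OF P Bhk Q a b]
        by (simp add: sum_divide_distrib)
    qed
    also have "\<dots> = (\<Sum>d\<in>{0..<n}. \<Sum>e\<in>{0..<n}. \<Sum>k. P $$ (a,d) * ((Bh ^\<^sub>m k) $$ (d,e) / fact k) * Q $$ (e,b))"
    proof -
      have s: "summable (\<lambda>k. P $$ (a,d) * ((Bh ^\<^sub>m k) $$ (d,e) / fact k) * Q $$ (e,b))"
        if "d \<in> {0..<n}" "e \<in> {0..<n}" for d e
        using sumB[of d e] that by (intro summable_mult2 summable_mult) auto
      show ?thesis
        by (subst suminf_sum, rule summable_sum, rule s, assumption+)
           (rule sum.cong[OF refl], rule suminf_sum, rule s, assumption+)
    qed
    also have "\<dots> = (\<Sum>d\<in>{0..<n}. \<Sum>e\<in>{0..<n}. P $$ (a,d) * E $$ (d,e) * Q $$ (e,b))"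
    proof (intro sum.cong refl)
      fix d e assume d: "d \<in> {0..<n}" and e: "e \<in> {0..<n}"
      have s: "summable (\<lambda>k. (Bh ^\<^sub>m k) $$ (d,e) / fact k)" using sumB[of d e] d e by simp
      have "(\<Sum>k. P $$ (a,d) * ((Bh ^\<^sub>m k) $$ (d,e) / fact k) * Q $$ (e,b)) =
            (\<Sum>k. P $$ (a,d) * ((Bh ^\<^sub>m k) $$ (d,e) / fact k)) * Q $$ (e,b)"
        by (rule suminf_mult2[symmetric]) (rule summable_mult[OF s])
      also have "(\<Sum>k. P $$ (a,d) * ((Bh ^\<^sub>m k) $$ (d,e) / fact k)) = 
            P $$ (a,d) * (\<Sum>k. (Bh ^\<^sub>m k) $$ (d,e) / fact k)"
        by (rule suminf_mult[OF s])
      finally have "(\<Sum>k. P $$ (a,d) * ((Bh ^\<^sub>m k) $$ (d,e) / fact k) * Q $$ (e,b)) =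
            P $$ (a,d) * (\<Sum>k. (Bh ^\<^sub>m k) $$ (d,e) / fact k) * Q $$ (e,b)" .
      then show "(\<Sum>k. P $$ (a,d) * ((Bh ^\<^sub>m k) $$ (d,e) / fact k) * Q $$ (e,b)) =
            P $$ (a,d) * E $$ (d,e) * Q $$ (e,b)"
        using d e unfolding E_def by simp
    qed
    also have "\<dots> = (P * E * Q) $$ (a,b)"
      by (rule triple_prod_entry[OF P E Q a b, symmetric])
    finally show "to_mat (cmat (mexp (h *\<^sub>R X))) $$ (a,b) = (P * E * Q) $$ (a,b)" .
  qed (use P Q in \<open>auto simp: n_def\<close>)
  have sim: "similar_mat (P * E * Q) E"
    unfolding similar_mat_def
    by (rule exI[of _ P], rule exI[of _ Q], rule similar_mat_witI[OF W(1) W(2) refl _ E P Q]) (use P E Q in auto)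
  have Ek: "upper_triangular (Bh ^\<^sub>m k) \<and> (\<forall>i<n. (Bh ^\<^sub>m k) $$ (i,i) = (Bh $$ (i,i)) ^ k)" for k
    by (rule upper_triangular_pow[OF Bh uth])
  have utE: "upper_triangular E"
  proof (rule upper_triangularI)
    fix i j assume j: "j < i" and i: "i < dim_row E"
    hence "i < n" using E by simp
    then have "(Bh ^\<^sub>m k) $$ (i,j) = 0" for k using Ek[of k] j Bhk[of k] by (auto simp: upper_triangular_def)
    then show "E $$ (i,j) = 0" unfolding E_def using i j E by simp
  qed
  have Ediag: "E $$ (i,i) = exp (mu i * c)" if i: "i < n" for i
  proof -
    have "E $$ (i,i) = (\<Sum>k. (Bh $$ (i,i)) ^ k / fact k)" unfolding E_def using i Ek by simp
    also have "\<dots> = exp (Bh $$ (i,i))" by (rule sums_unique[symmetric, OF exp_series_complex])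
    also have "Bh $$ (i,i) = mu i * c" unfolding Bh_def using i B Bdiag by (simp add: mult.commute)
    finally show ?thesis .
  qed
  have "charpoly (mexp (h *\<^sub>R X)) = char_poly E"
    unfolding charpoly_char_poly mexp_eq by (rule char_poly_similar[OF sim])
  also have "\<dots> = (\<Prod>a\<leftarrow>diag_mat E. [:- a, 1:])" by (rule char_poly_upper_triangular[OF E utE])
  also have "\<dots> = (\<Prod>i<n. [:- exp (mu i * c), 1:])"
    unfolding prod_lessThan_list diag_mat_def using E Ediag
    by (simp add: o_def) (intro arg_cong[where f=prod_list] map_cong, auto)
  finally show ?thesis unfolding n_def c_def .
qed


definition cvec :: "real^'n::finite \<Rightarrow> complex^'n" where
  "cvec x = (\<chi> i. complex_of_real (x $ i))"

definition Re_vec :: "complex^'n::finite \<Rightarrow> real^'n" where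
  "Re_vec v = (\<chi> i. Re (v $ i))"

lemma cmat_cvec: "cmat M *v cvec x = cvec (M *v x)"
  by (simp add: Finite_Cartesian_Product.vec_eq_iff cmat_def cvec_def matrix_vector_mult_def)

lemma Re_vec_cmat: "Re_vec (cmat M *v v) = M *v Re_vec v"
  by (simp add: Finite_Cartesian_Product.vec_eq_iff cmat_def Re_vec_def matrix_vector_mult_def Re_sum)

lemma Re_vec_cvec[simp]: "Re_vec (cvec x) = x"
  by (simp add: Finite_Cartesian_Product.vec_eq_iff Re_vec_def cvec_def)

lemma mat_commute: "mat c ** (A::'a::comm_semiring_1^'n::finite^'n) = A ** mat c"
  by (simp add: mat_mult_left mat_mult_right)

lemma matpow_commute:
  assumes "X ** Y = Y ** (X::'a::comm_ring_1^'n::finite^'n)"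
  shows "matpow X k ** Y = Y ** matpow X k"
proof (induction k)
  case 0 then show ?case by simp
next
  case (Suc k)
  have "matpow X (Suc k) ** Y = X ** (matpow X k ** Y)" by (simp add: matrix_mul_assoc)
  also have "\<dots> = (X ** Y) ** matpow X k" by (simp add: Suc matrix_mul_assoc)
  also have "\<dots> = Y ** matpow X (Suc k)" by (simp add: assms matrix_mul_assoc)
  finally show ?case .
qed

lemma matpow_add: "matpow (X::'a::comm_ring_1^'n::finite^'n) (a + b) = matpow X a ** matpow X b"
  by (induction a) (simp_all add: matrix_mul_assoc)

lemma gen_eigvecs_invariant:
  assumes "v \<in> gen_eigvecs A \<mu>"
  shows "cmat A *v v \<in> gen_eigvecs A \<mu>"
proof -
  from assms obtain k where k: "matpow (cmat A - mat \<mu>) k *v v = 0" unfolding gen_eigvecs_def by auto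
  have c: "(cmat A - mat \<mu>) ** cmat A = cmat A ** (cmat A - mat \<mu>)"
    by (simp add: matrix_sub_rdistrib matrix_sub_ldistrib mat_commute)
  have "matpow (cmat A - mat \<mu>) k *v (cmat A *v v) = cmat A *v (matpow (cmat A - mat \<mu>) k *v v)"
    by (simp add: matrix_vector_mul_assoc matpow_commute[OF c])
  then show ?thesis using k unfolding gen_eigvecs_def by auto
qed

lemma span_invariant:
  fixes M :: "'a::field^'n::finite^'n"
  assumes v: "v \<in> vec.span S" and inv: "\<And>s. s \<in> S \<Longrightarrow> M *v s \<in> vec.span S"
  shows "M *v v \<in> vec.span S"
  using v
proof (induction rule: vec.span_induct)
  case base
  show ?case
    by (rule vec.subspaceI)
       (auto simp: matrix_vector_right_distrib vector_scalar_commute intro: vec.span_add vec.span_scale vec.span_zero)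
next
  case (step x)
  then show ?case using inv by simp
qed

lemma frame_invariant:
  fixes A :: "real^'n::finite^'n" and U :: "real^'r::finite^'n"
  assumes U_in: "U \<in> frames A lam"
  shows "A ** U = U ** (transpose U ** A ** U)"
proof -
  have UU: "transpose U ** U = mat 1" using U_in unfolding frames_def by simp
  have rng: "range (\<lambda>c. cmat U *v c) = vec.span (\<Union>i\<in>{..<CARD('r)}. gen_eigvecs A (lam i))"
    using U_in unfolding frames_def by simp
  have "(A ** U) *v x = (U ** (transpose U ** A ** U)) *v x" for x
  proof -
    have "cmat U *v cvec x \<in> vec.span (\<Union>i\<in>{..<CARD('r)}. gen_eigvecs A (lam i))"
      using rng by blast
    then have "cmat A *v (cmat U *v cvec x) \<in> vec.span (\<Union>i\<in>{..<CARD('r)}. gen_eigvecs A (lam i))"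
      by (rule span_invariant) (auto intro: vec.span_base gen_eigvecs_invariant)
    then obtain c where c: "cmat A *v (cmat U *v cvec x) = cmat U *v c" using rng by blast
    have "A *v (U *v x) = U *v Re_vec c"
      using arg_cong[OF c, of Re_vec] by (simp add: cmat_cvec Re_vec_cmat)
    moreover then have "Re_vec c = transpose U *v (A *v (U *v x))"
      using UU by (simp add: matrix_vector_mul_assoc)
    ultimately show ?thesis by (simp add: matrix_vector_mul_assoc matrix_mul_assoc)
  qed
  then show ?thesis by (simp add: matrix_eq)
qed

lemma matpow_intertwine:
  assumes "X ** U = U ** (Y::'a::comm_ring_1^'r::finite^'r)"
  shows "matpow (X::'a^'n::finite^'n) k ** U = U ** matpow Y k"
proof (induction k)
  case 0 then show ?case by simp
next
  case (Suc k)
  have "matpow X (Suc k) ** U = X ** (matpow X k ** U)" by (simp add: matrix_mul_assoc)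
  also have "\<dots> = (X ** U) ** matpow Y k" by (simp add: Suc matrix_mul_assoc)
  also have "\<dots> = U ** matpow Y (Suc k)" by (simp add: assms matrix_mul_assoc)
  finally show ?case .
qed

lemma mexp_intertwine:
  fixes X :: "real^'n::finite^'n" and Y :: "real^'r::finite^'r" and U :: "real^'r^'n"
  assumes XU: "X ** U = U ** Y"
  shows "mexp X ** U = U ** mexp Y"
proof (rule mat_eqI)
  fix i j
  have "(mexp X ** U) $ i $ j = (\<Sum>l\<in>UNIV. (\<Sum>k. matpow X k $ i $ l / fact k) * U $ l $ j)"
    by (simp add: matrix_matrix_mult_def mexp_def)
  also have "\<dots> = (\<Sum>l\<in>UNIV. \<Sum>k. matpow X k $ i $ l / fact k * U $ l $ j)"
    by (intro sum.cong refl suminf_mult2 summable_matpow)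
  also have "\<dots> = (\<Sum>k. \<Sum>l\<in>UNIV. matpow X k $ i $ l / fact k * U $ l $ j)"
    by (rule suminf_sum[symmetric]) (intro summable_mult2 summable_matpow)
  also have "\<dots> = (\<Sum>k. (matpow X k ** U) $ i $ j / fact k)"
    by (simp add: matrix_matrix_mult_def sum_divide_distrib)
  also have "\<dots> = (\<Sum>k. (U ** matpow Y k) $ i $ j / fact k)"
    by (simp add: matpow_intertwine[OF XU])
  also have "\<dots> = (\<Sum>k. \<Sum>l\<in>UNIV. U $ i $ l * (matpow Y k $ l $ j / fact k))"
    by (simp add: matrix_matrix_mult_def sum_divide_distrib)
  also have "\<dots> = (\<Sum>l\<in>UNIV. \<Sum>k. U $ i $ l * (matpow Y k $ l $ j / fact k))"
    by (rule suminf_sum) (intro summable_mult summable_matpow)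
  also have "\<dots> = (\<Sum>l\<in>UNIV. U $ i $ l * (\<Sum>k. matpow Y k $ l $ j / fact k))"
    by (intro sum.cong refl suminf_mult summable_matpow)
  also have "\<dots> = (U ** mexp Y) $ i $ j"
    by (simp add: matrix_matrix_mult_def mexp_def)
  finally show "(mexp X ** U) $ i $ j = (U ** mexp Y) $ i $ j" .
qed


lemma poly_det: "poly (det (M::'a::comm_ring_1 poly^'n::finite^'n)) a = det (\<chi> i j. poly (M $ i $ j) a)"
  unfolding Determinants.det_def by (simp add: poly_sum poly_prod)

lemma mat_vec_mult: "mat a *v (v::'a::comm_semiring_1^'n::finite) = a *s v"
  apply (vector matrix_vector_mult_def Finite_Cartesian_Product.mat_def)
  apply (simp add: if_distrib if_distribR cong del: if_weak_cong)
  done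

lemma charpoly_root_eigvec:
  fixes M :: "real^'n::finite^'n"
  assumes "poly (charpoly M) a = 0"
  shows "\<exists>v. v \<noteq> 0 \<and> cmat M *v v = a *s v"
proof -
  have "poly (charpoly M) a = det (mat a - cmat M)"
    unfolding charpoly_def poly_det
    by (rule arg_cong[where f=det], rule mat_eqI) (simp add: Finite_Cartesian_Product.mat_def cmat_def)
  then have "det (matrix (\<lambda>x. (mat a - cmat M) *v x)) = 0" using assms by simp
  then have "\<not> inj (\<lambda>x. (mat a - cmat M) *v x)"
    using det_nz_iff_inj_gen[OF matrix_vector_mul_linear_gen[of "mat a - cmat M"]] by simp
  then obtain x y where xy: "x \<noteq> y" "(mat a - cmat M) *v x = (mat a - cmat M) *v y"
    unfolding inj_def by blast
  define v where "v = x - y"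
  have "v \<noteq> 0" using xy unfolding v_def by simp
  moreover have "(mat a - cmat M) *v v = 0" using xy unfolding v_def by (simp add: matrix_vector_right_distrib[symmetric] algebra_simps)
  then have "cmat M *v v = a *s v" by (simp add: matrix_vector_mult_diff_rdistrib mat_vec_mult)
  ultimately show ?thesis by blast
qed

primrec pm :: "'a::comm_ring_1^'n::finite^'n \<Rightarrow> (nat \<Rightarrow> 'a) \<Rightarrow> nat \<Rightarrow> nat \<Rightarrow> 'a^'n^'n" where
  "pm M l N 0 = mat 1"
| "pm M l N (Suc m) = matpow (M - mat (l m)) N ** pm M l N m"

definition Pol :: "'a::comm_ring_1^'n::finite^'n \<Rightarrow> ('a^'n^'n) set" where
  "Pol M = {P. \<forall>Z. Z ** M = M ** Z \<longrightarrow> P ** Z = Z ** P}"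

lemma Pol_self: "M \<in> Pol M" unfolding Pol_def by (simp add: eq_commute)

lemma Pol_mat: "mat c \<in> Pol M" unfolding Pol_def using mat_commute by blast

lemma Pol_diff: assumes "P \<in> Pol M" "Q \<in> Pol M" shows "P - Q \<in> Pol M"
  unfolding Pol_def
proof (intro CollectI allI impI)
  fix Z assume Z: "Z ** M = M ** Z"
  have PZ: "P ** Z = Z ** P" and QZ: "Q ** Z = Z ** Q" using assms Z unfolding Pol_def by auto
  show "(P - Q) ** Z = Z ** (P - Q)" by (simp add: matrix_sub_rdistrib matrix_sub_ldistrib PZ QZ)
qed

lemma Pol_mult: assumes "P \<in> Pol M" "Q \<in> Pol M" shows "P ** Q \<in> Pol M"
  unfolding Pol_def
proof (intro CollectI allI impI)
  fix Z assume Z: "Z ** M = M ** Z"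
  have PZ: "P ** Z = Z ** P" and QZ: "Q ** Z = Z ** Q" using assms Z unfolding Pol_def by auto
  have "P ** Q ** Z = P ** (Q ** Z)" by (simp add: matrix_mul_assoc)
  also have "\<dots> = (P ** Z) ** Q" by (simp add: QZ matrix_mul_assoc)
  also have "\<dots> = Z ** (P ** Q)" by (simp add: PZ matrix_mul_assoc)
  finally show "P ** Q ** Z = Z ** (P ** Q)" .
qed

lemma Pol_matpow: "P \<in> Pol M \<Longrightarrow> matpow P k \<in> Pol M"
  by (induction k) (simp_all add: Pol_mat Pol_mult)

lemma Pol_comm: assumes "P \<in> Pol M" "Q \<in> Pol M" shows "P ** Q = Q ** P"
proof -
  have "Q ** M = M ** Q" using assms(2) unfolding Pol_def by blast
  then show ?thesis using assms(1) unfolding Pol_def by blast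
qed

lemma pm_Pol: "pm M l N m \<in> Pol M"
  by (induction m) (simp_all add: Pol_mat Pol_mult Pol_matpow Pol_diff Pol_self)

lemma pm_factor: "j < m \<Longrightarrow> \<exists>G. pm M l N m = G ** matpow (M - mat (l j)) N"
proof (induction m)
  case 0 then show ?case by simp
next
  case (Suc m)
  have F: "matpow (M - mat (l m)) N \<in> Pol M" by (simp add: Pol_mat Pol_matpow Pol_diff Pol_self)
  show ?case
  proof (cases "j = m")
    case True
    have "pm M l N (Suc m) = pm M l N m ** matpow (M - mat (l m)) N"
      using Pol_comm[OF F pm_Pol] by simp
    then show ?thesis using True by blast
  next
    case False
    then have "j < m" using Suc by simp
    then obtain G where "pm M l N m = G ** matpow (M - mat (l j)) N" using Suc by blast
    then have "pm M l N (Suc m) = (matpow (M - mat (l m)) N ** G) ** matpow (M - mat (l j)) N"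
      by (simp add: matrix_mul_assoc)
    then show ?thesis by blast
  qed
qed

lemma matpow_eig:
  assumes "M *v w = a *s (w::'a::field^'n::finite)"
  shows "matpow (M - mat \<mu>) N *v w = ((a - \<mu>) ^ N) *s w"
proof (induction N)
  case 0 then show ?case by simp
next
  case (Suc N)
  have "matpow (M - mat \<mu>) (Suc N) *v w = (M - mat \<mu>) *v (((a - \<mu>) ^ N) *s w)"
    by (simp add: matrix_vector_mul_assoc[symmetric] Suc)
  also have "\<dots> = ((a - \<mu>) ^ N) *s ((M - mat \<mu>) *v w)" by (simp add: vector_scalar_commute)
  also have "(M - mat \<mu>) *v w = (a - \<mu>) *s w"
    using assms by (simp add: matrix_vector_mult_diff_rdistrib mat_vec_mult vector_sub_rdistrib)
  finally have "matpow (M - mat \<mu>) (Suc N) *v w = ((a - \<mu>) ^ N) *s ((a - \<mu>) *s w)" .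
  then show ?case by (simp only: vector_smult_assoc power_Suc2)
qed

lemma pm_eig:
  assumes "M *v w = a *s (w::'a::field^'n::finite)"
  shows "pm M l N m *v w = (\<Prod>i<m. (a - l i) ^ N) *s w"
proof (induction m)
  case 0 then show ?case by simp
next
  case (Suc m)
  have "pm M l N (Suc m) *v w = matpow (M - mat (l m)) N *v ((\<Prod>i<m. (a - l i) ^ N) *s w)"
    by (simp add: matrix_vector_mul_assoc[symmetric] Suc)
  also have "\<dots> = (\<Prod>i<m. (a - l i) ^ N) *s (matpow (M - mat (l m)) N *v w)"
    by (simp add: vector_scalar_commute)
  also have "\<dots> = (\<Prod>i<Suc m. (a - l i) ^ N) *s w"
    by (simp add: matpow_eig[OF assms] mult.commute)
  finally show ?case .
qed

lemma eig_in_span: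
  fixes A :: "real^'n::finite^'n" and w :: "complex^'n" and lam :: "nat \<Rightarrow> complex"
  assumes w: "w \<in> vec.span (\<Union>i\<in>{..<m}. gen_eigvecs A (lam i))" and w0: "w \<noteq> 0"
    and eig: "cmat A *v w = a *s w"
  shows "\<exists>i<m. a = lam i"
proof -
  define W where "W = {v. \<exists>N0. \<forall>N\<ge>N0. pm (cmat A) lam N m *v v = 0}"
  have subW: "vec.subspace W"
  proof (rule vec.subspaceI)
    show "0 \<in> W" unfolding W_def by simp
  next
    fix x y assume "x \<in> W" "y \<in> W"
    then obtain N1 N2 where "\<forall>N\<ge>N1. pm (cmat A) lam N m *v x = 0" "\<forall>N\<ge>N2. pm (cmat A) lam N m *v y = 0"
      unfolding W_def by auto
    then have "\<forall>N\<ge>max N1 N2. pm (cmat A) lam N m *v (x + y) = 0"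
      by (simp add: matrix_vector_right_distrib)
    then show "x + y \<in> W" unfolding W_def by blast
  next
    fix c x assume "x \<in> W"
    then show "c *s x \<in> W" unfolding W_def by (auto simp: vector_scalar_commute)
  qed
  have "w \<in> W" using w
  proof (induction rule: vec.span_induct)
    case base
    show ?case using subW by simp
  next
    case (step x)
    then obtain j where j: "j < m" and x: "x \<in> gen_eigvecs A (lam j)" by auto
    then obtain k where k: "matpow (cmat A - mat (lam j)) k *v x = 0" unfolding gen_eigvecs_def by auto
    have "pm (cmat A) lam N m *v x = 0" if N: "N \<ge> k" for N
    proof -
      obtain G where G: "pm (cmat A) lam N m = G ** matpow (cmat A - mat (lam j)) N"
        using pm_factor[OF j] by blast
      have "matpow (cmat A - mat (lam j)) N = matpow (cmat A - mat (lam j)) (N - k) ** matpow (cmat A - mat (lam j)) k"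
        using N matpow_add[of "cmat A - mat (lam j)" "N - k" k] by simp
      then show ?thesis using k G by (simp add: matrix_vector_mul_assoc[symmetric])
    qed
    then show ?case unfolding W_def by blast
  qed
  then obtain N where "pm (cmat A) lam N m *v w = 0" unfolding W_def by auto
  then have "(\<Prod>i<m. (a - lam i) ^ N) *s w = 0" using pm_eig[OF eig] by simp
  then have "(\<Prod>i<m. (a - lam i) ^ N) = 0" using w0 by (simp add: vector_mul_eq_0)
  then show ?thesis by auto
qed


lemma linear_factors_unique:
  fixes M N :: "'a::idom multiset"
  assumes "(\<Prod>a\<in>#M. [:- a, 1:]) = (\<Prod>a\<in>#N. [:- a, 1:])"
  shows "M = N"
  using assms
proof (induction M arbitrary: N)
  case empty
  show ?case
  proof (rule ccontr)
    assume "{#} \<noteq> N"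
    then obtain x where x: "x \<in># N" by (metis multiset_nonemptyE)
    have "poly (\<Prod>a\<in>#N. [:- a, 1:]) x = 0"
      using x by (auto simp: poly_prod_mset)
    then show False using empty by simp
  qed
next
  case (add x M)
  have "poly (\<Prod>a\<in>#N. [:- a, 1:]) x = 0"
    using add.prems[symmetric] by (simp add: poly_prod_mset)
  then have "x \<in># N" by (auto simp: poly_prod_mset)
  then obtain N' where N: "N = add_mset x N'" by (metis multi_member_split)
  have "[:- x, 1:] * (\<Prod>a\<in>#M. [:- a, 1:]) = [:- x, 1:] * (\<Prod>a\<in>#N'. [:- a, 1:])"
    using add.prems unfolding N by simp
  then have "(\<Prod>a\<in>#M. [:- a, 1:]) = (\<Prod>a\<in>#N'. [:- a, 1:])"
    by (rule mult_left_cancel[THEN iffD1, rotated]) simp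
  then have "M = N'" by (rule add.IH)
  then show ?case unfolding N by simp
qed

lemma prod_list_mset: "(\<Prod>a\<leftarrow>xs. f a) = (\<Prod>a\<in>#mset xs. f a)"
  by (metis mset_map prod_mset_prod_list)

lemma scaleR_matrix_mult_left: "(c *\<^sub>R (X::real^'m::finite^'n::finite)) ** (Y::real^'k::finite^'m) = c *\<^sub>R (X ** Y)"
  by (rule mat_eqI) (simp add: matrix_matrix_mult_def sum_distrib_left mult.assoc)

lemma scaleR_matrix_mult_right: "(X::real^'m::finite^'n::finite) ** (c *\<^sub>R (Y::real^'k::finite^'m)) = c *\<^sub>R (X ** Y)"
  by (rule mat_eqI) (simp add: matrix_matrix_mult_def sum_distrib_left mult.left_commute)

lemma charpoly_scalar: "charpoly (c *\<^sub>R mat 1 :: real^'r::finite^'r) = [:- complex_of_real c, 1:] ^ CARD('r)"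
proof -
  have "charpoly (c *\<^sub>R mat 1 :: real^'r::finite^'r) = (\<Prod>i\<in>(UNIV::'r set). [:- complex_of_real c, 1:])"
    unfolding charpoly_def by (subst det_diagonal) (auto simp: Finite_Cartesian_Product.mat_def)
  then show ?thesis by simp
qed

lemma charpoly_factorized: "\<exists>as. charpoly (M::real^'n::finite^'n) = (\<Prod>a\<leftarrow>as. [:- a, 1:]) \<and> length as = CARD('n)"
  unfolding charpoly_char_poly by (rule char_poly_factorized) simp

lemma charpoly_frame:
  fixes A :: "real^'n::finite^'n" and lam :: "nat \<Rightarrow> complex" and U :: "real^'r::finite^'n"
  assumes r_lt_n: "CARD('r) < CARD('n)"
    and eigs: "charpoly A = (\<Prod>i<CARD('n). [:- lam i, 1:])"
    and sorted: "\<And>i j. i \<le> j \<Longrightarrow> j < CARD('n) \<Longrightarrow> Re (lam j) \<le> Re (lam i)"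
    and gap: "Re (lam CARD('r)) < Re (lam (CARD('r) - 1))"
    and U_in: "U \<in> frames A lam"
  shows "charpoly (transpose U ** A ** U) = (\<Prod>i<CARD('r). [:- lam i, 1:])"
proof -
  define n where "n = CARD('n)"
  define r where "r = CARD('r)"
  define Bm where "Bm = transpose U ** A ** U"
  define f :: "complex \<Rightarrow> complex poly" where "f = (\<lambda>a. [:- a, 1:])"
  define S where "S = lam ` {..<r}"
  have UU: "transpose U ** U = mat 1" using U_in unfolding frames_def by simp
  have rng: "range (\<lambda>c. cmat U *v c) = vec.span (\<Union>i\<in>{..<r}. gen_eigvecs A (lam i))"
    using U_in unfolding frames_def r_def by simp
  have AU: "A ** U = U ** Bm" unfolding Bm_def by (rule frame_invariant[OF U_in])
  obtain as where cpB: "charpoly Bm = (\<Prod>a\<leftarrow>as. f a)" and las: "length as = r"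
    using charpoly_factorized[of Bm] unfolding f_def r_def by blast
  have inS: "a \<in> S" if a: "a \<in> set as" for a
  proof -
    have "poly (charpoly Bm) a = 0"
      unfolding cpB poly_prod_list using a by (auto simp: prod_list_zero_iff f_def)
    then obtain v where v0: "v \<noteq> 0" and ev: "cmat Bm *v v = a *s v"
      using charpoly_root_eigvec by blast
    define w where "w = cmat U *v v"
    have "cmat (transpose U) *v w = v"
      unfolding w_def by (simp add: matrix_vector_mul_assoc cmat_mult[symmetric] UU cmat_one)
    then have w0: "w \<noteq> 0" using v0 by auto
    have "cmat A *v w = cmat (A ** U) *v v" unfolding w_def by (simp add: matrix_vector_mul_assoc cmat_mult)
    also have "\<dots> = cmat U *v (cmat Bm *v v)" unfolding AU by (simp add: matrix_vector_mul_assoc cmat_mult)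
    also have "\<dots> = a *s w" unfolding ev w_def by (simp add: vector_scalar_commute)
    finally have eig: "cmat A *v w = a *s w" .
    have "w \<in> vec.span (\<Union>i\<in>{..<r}. gen_eigvecs A (lam i))" using rng unfolding w_def by blast
    from eig_in_span[OF this w0 eig] show ?thesis unfolding S_def by auto
  qed
  define c :: real where "c = 1 + (\<Sum>a\<in>set as. cmod a)"
  have cnot: "complex_of_real c \<notin> set as"
  proof
    assume ca: "complex_of_real c \<in> set as"
    have "cmod (complex_of_real c) \<le> (\<Sum>a\<in>set as. cmod a)"
      using ca by (intro member_le_sum) auto
    moreover have "c \<ge> 0" unfolding c_def by (simp add: sum_nonneg add_nonneg_nonneg)
    then have "cmod (complex_of_real c) = c" by simp
    ultimately show False unfolding c_def by simp
  qed
  define K where "K = transpose U ** A - c *\<^sub>R transpose U"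
  have KU: "Bm - K ** U = c *\<^sub>R mat 1"
    unfolding K_def Bm_def by (simp add: matrix_sub_rdistrib scaleR_matrix_mult_left UU)
  obtain ws where cpW: "charpoly (A - U ** K) = (\<Prod>a\<leftarrow>ws. f a)"
    using charpoly_factorized[of "A - U ** K"] unfolding f_def by blast
  have "charpoly (A - U ** K) * charpoly Bm = charpoly A * charpoly (Bm - K ** U)"
    by (rule charpoly_block[OF AU])
  then have "(\<Prod>a\<in>#mset ws + mset as. f a) = (\<Prod>a\<in>#mset (map lam [0..<n]) + replicate_mset r (complex_of_real c). f a)"
    unfolding cpW cpB KU charpoly_scalar eigs prod_lessThan_list prod_list_mset
    by (simp add: f_def r_def n_def o_def image_mset.compositionality)
  then have meq: "mset ws + mset as = mset (map lam [0..<n]) + replicate_mset r (complex_of_real c)"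
    unfolding f_def by (rule linear_factors_unique)
  have sub1: "mset as \<subseteq># mset (map lam [0..<n])"
  proof (rule mset_subset_eqI)
    fix x
    have "count (mset ws + mset as) x = count (mset (map lam [0..<n]) + replicate_mset r (complex_of_real c)) x"
      using meq by simp
    then show "count (mset as) x \<le> count (mset (map lam [0..<n])) x"
    proof (cases "x = complex_of_real c")
      case True
      have "count (mset as) (complex_of_real c) = 0" using cnot by (simp add: count_eq_zero_iff)
      then show ?thesis using True by (metis le0)
    next
      case False
      then show ?thesis using \<open>count (mset ws + mset as) x = _\<close> by simp
    qed
  qed
  have lamS: "lam i \<in> S \<longleftrightarrow> i < r" if i: "i < n" for i
  proof
    assume "lam i \<in> S"
    then obtain j where j: "j < r" "lam i = lam j" unfolding S_def by auto
    show "i < r"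
    proof (rule ccontr)
      assume "\<not> i < r"
      then have "Re (lam i) \<le> Re (lam r)" using sorted[of r i] i unfolding n_def r_def by simp
      also have "\<dots> < Re (lam (r - 1))" using gap unfolding r_def .
      also have "\<dots> \<le> Re (lam j)" using sorted[of j "r - 1"] j r_lt_n unfolding n_def r_def by simp
      finally show False using j by simp
    qed
  qed (auto simp: S_def)
  have rn: "r \<le> n" using r_lt_n unfolding r_def n_def by simp
  have filt: "filter (\<lambda>x. x \<in> S) (map lam [0..<n]) = map lam [0..<r]"
  proof -
    have "[0..<n] = [0..<r] @ [r..<n]" using rn upt_add_eq_append[of 0 r "n - r"] by simp
    moreover have "filter (\<lambda>x. x \<in> S) (map lam [0..<r]) = map lam [0..<r]"
      using lamS rn by (auto simp: filter_id_conv)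
    moreover have "filter (\<lambda>x. x \<in> S) (map lam [r..<n]) = []"
      using lamS by (auto simp: filter_empty_conv)
    ultimately show ?thesis by simp
  qed
  have "mset as = filter_mset (\<lambda>x. x \<in> S) (mset as)"
  proof -
    have "filter (\<lambda>x. x \<in> S) as = as" using inS by (simp add: filter_id_conv)
    then show ?thesis by (metis mset_filter)
  qed
  also have "\<dots> \<subseteq># filter_mset (\<lambda>x. x \<in> S) (mset (map lam [0..<n]))"
    by (rule multiset_filter_mono[OF sub1])
  also have "\<dots> = mset (map lam [0..<r])" using filt by (metis mset_filter)
  finally have sub2: "mset as \<subseteq># mset (map lam [0..<r])" .
  have eq: "mset as = mset (map lam [0..<r])"
  proof (rule ccontr)
    assume "mset as \<noteq> mset (map lam [0..<r])"
    then have "mset as \<subset># mset (map lam [0..<r])" using sub2 by (simp add: subset_mset.le_neq_trans)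
    then have "size (mset as) < size (mset (map lam [0..<r]))" by (rule mset_subset_size)
    then show False using las by simp
  qed
  have "charpoly Bm = (\<Prod>a\<in>#mset as. f a)" unfolding cpB prod_list_mset ..
  also have "\<dots> = (\<Prod>i<r. f (lam i))" unfolding eq prod_lessThan_list prod_list_mset by (simp add: o_def image_mset.compositionality)
  finally show ?thesis unfolding Bm_def r_def f_def .
qed


theorem proposition6:
  fixes A :: "real^'n^'n" and lam :: "nat \<Rightarrow> complex"
    and h :: real and G :: "real^'q^'n" and C :: "real^'n^'p" and H :: "real^'p^'p"
    and U :: "real^'r^'n" and R :: "real^'r^'r"
  assumes r_lt_n: "CARD('r) < CARD('n)"
    and eigs: "charpoly A = (\<Prod>i<CARD('n). [:- lam i, 1:])"
    and sorted: "\<And>i j. i \<le> j \<Longrightarrow> j < CARD('n) \<Longrightarrow> Re (lam j) \<le> Re (lam i)"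
    and gap: "Re (lam CARD('r)) < Re (lam (CARD('r) - 1))"
    and h_pos: "h > 0"
    and H_inv: "det H \<noteq> 0"
    and U_in: "U \<in> frames A lam"
    and reach: "reachable (transpose U ** mexp (h *\<^sub>R A) ** U) (transpose U ** disc_noise h A G)"
    and obs: "observable (C ** U) (transpose U ** mexp (h *\<^sub>R A) ** U)"
    and R_pd: "pd R"
    and R_eq: "let Ad = mexp (h *\<^sub>R A); AU = transpose U ** Ad ** U;
                   GU = transpose U ** disc_noise h A G; CU = C ** U; M = H ** transpose H;
                   F = R ** transpose CU ** matrix_inv (CU ** R ** transpose CU + M)
               in R = AU ** (R - F ** CU ** R) ** transpose AU + GU ** transpose GU"
  shows "let Ad = mexp (h *\<^sub>R A); AU = transpose U ** Ad ** U; CU = C ** U;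
             M = H ** transpose H;
             F = R ** transpose CU ** matrix_inv (CU ** R ** transpose CU + M)
         in charpoly (Ad ** (mat 1 - U ** F ** C))
              = charpoly (AU ** (mat 1 - F ** CU))
                * (\<Prod>i\<in>{CARD('r)..<CARD('n)}. [:- exp (lam i * complex_of_real h), 1:])"
proof -
  define n where "n = CARD('n)"
  define r where "r = CARD('r)"
  define Ad where "Ad = mexp (h *\<^sub>R A)"
  define Bm where "Bm = transpose U ** A ** U"
  define AU where "AU = transpose U ** Ad ** U"
  define CU where "CU = C ** U"
  define M where "M = H ** transpose H"
  define F where "F = R ** transpose CU ** matrix_inv (CU ** R ** transpose CU + M)"
  have UU: "transpose U ** U = mat 1" using U_in unfolding frames_def by simp
  have AUeq: "A ** U = U ** Bm" unfolding Bm_def by (rule frame_invariant[OF U_in])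
  have hAU: "(h *\<^sub>R A) ** U = U ** (h *\<^sub>R Bm)"
    by (simp add: scaleR_matrix_mult_left scaleR_matrix_mult_right AUeq)
  have AdU0: "Ad ** U = U ** mexp (h *\<^sub>R Bm)" unfolding Ad_def by (rule mexp_intertwine[OF hAU])
  have AUm: "AU = mexp (h *\<^sub>R Bm)"
  proof -
    have "AU = transpose U ** (Ad ** U)" unfolding AU_def by (simp add: matrix_mul_assoc)
    also have "\<dots> = (transpose U ** U) ** mexp (h *\<^sub>R Bm)" unfolding AdU0 by (simp add: matrix_mul_assoc)
    finally show ?thesis unfolding UU by simp
  qed
  have AdU: "Ad ** U = U ** AU" using AdU0 AUm by simp
  have e1: "Ad ** (mat 1 - U ** F ** C) = Ad - U ** (AU ** F ** C)"
  proof -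
    have "Ad ** (U ** F ** C) = U ** (AU ** F ** C)"
      by (simp add: matrix_mul_assoc AdU)
    then show ?thesis by (simp add: matrix_sub_ldistrib)
  qed
  have e2: "AU ** (mat 1 - F ** CU) = AU - (AU ** F ** C) ** U"
    unfolding CU_def by (simp add: matrix_sub_ldistrib matrix_mul_assoc)
  have blk: "charpoly (Ad - U ** (AU ** F ** C)) * charpoly AU = charpoly Ad * charpoly (AU - (AU ** F ** C) ** U)"
    by (rule charpoly_block[OF AdU])
  have cpAd: "charpoly Ad = (\<Prod>i<n. [:- exp (lam i * complex_of_real h), 1:])"
    unfolding Ad_def n_def by (rule charpoly_mexp[OF eigs])
  have cpB: "charpoly Bm = (\<Prod>i<CARD('r). [:- lam i, 1:])"
    unfolding Bm_def by (rule charpoly_frame[OF r_lt_n eigs sorted gap U_in])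
  have cpAU: "charpoly AU = (\<Prod>i<r. [:- exp (lam i * complex_of_real h), 1:])"
    unfolding AUm r_def by (rule charpoly_mexp[OF cpB])
  define Pr where "Pr = (\<Prod>i<r. [:- exp (lam i * complex_of_real h), 1:])"
  define T where "T = (\<Prod>i\<in>{r..<n}. [:- exp (lam i * complex_of_real h), 1:])"
  have split: "(\<Prod>i<n. [:- exp (lam i * complex_of_real h), 1:]) = Pr * T"
  proof -
    have rn: "r \<le> n" using r_lt_n unfolding r_def n_def by simp
    have un: "{..<n} = {..<r} \<union> {r..<n}" using rn by auto
    have "(\<Prod>i<n. [:- exp (lam i * complex_of_real h), 1:]) =
      (\<Prod>i\<in>{..<r} \<union> {r..<n}. [:- exp (lam i * complex_of_real h), 1:])"
      by (simp only: un)
    also have "\<dots> = Pr * T" unfolding Pr_def T_def by (rule prod.union_disjoint) auto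
    finally show ?thesis .
  qed
  have nz: "Pr \<noteq> 0" unfolding Pr_def by simp
  have "charpoly (Ad - U ** (AU ** F ** C)) * Pr = Pr * T * charpoly (AU - (AU ** F ** C) ** U)"
    using blk unfolding cpAU cpAd split Pr_def[symmetric] .
  then have "Pr * charpoly (Ad - U ** (AU ** F ** C)) = Pr * (T * charpoly (AU - (AU ** F ** C) ** U))"
    by (simp only: mult.assoc mult.commute)
  then have "charpoly (Ad - U ** (AU ** F ** C)) = T * charpoly (AU - (AU ** F ** C) ** U)"
    using nz by (rule mult_left_cancel[THEN iffD1, rotated])
  then have fin: "charpoly (Ad ** (mat 1 - U ** F ** C)) = charpoly (AU ** (mat 1 - F ** CU)) * T"
    unfolding e1 e2 by (simp only: mult.commute)
  show ?thesis
    using fin unfolding Let_def Ad_def AU_def CU_def M_def F_def T_def r_def n_def .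
qed


end
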